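(* Let $\mathcal{F}=C_1\wedge\dots\wedge C_m\sim\mathcal{F}(m,n,d)$ and define the $2^n\times m$ matrix $M$ whose rows are indexed by assignments $\alpha\in\{0,1\}^n$ and columns by clause indices $i\in[m]$, with $M[\alpha,i]=1$ if the $i$th clause is not satisfied by $\alpha$ and $M[\alpha,i]=0$ otherwise. For any $c>2/\log e$, if $m\ge c\,2^d n^2/d$, then the rows of $M$ are pairwise distinct with high probability.
   Context: $\log$ is base 2. $\mathcal{F}(m,n,d)$: random $d$-CNF on $n$ variables with $m$ clauses sampled independently and uniformly with replacement from the $\binom{n}{d}2^d$ clauses on $d$ distinct variables. "With high probability" means with probability tending to $1$ as $n\to\infty$. *)

theory Defs
  imports "HOL-Probability.Probability"
begin

text \<open>A literal is a pair (v, b): variable v with polarity b (b = True: positive literal x_v,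
  b = False: negative literal not x_v). A clause is a set of literals.\<close>
type_synonym clause = "(nat \<times> bool) set"

definition clauses :: "nat \<Rightarrow> nat \<Rightarrow> clause set" where
  "clauses n d = {C. C \<subseteq> {..<n} \<times> UNIV \<and> finite C \<and> card C = d \<and> inj_on fst C}"

text \<open>F(m,n,d): m clauses sampled independently and uniformly with replacement;
  the formula is the function i \<mapsto> C_i on {..<m}.\<close>
definition random_cnf :: "nat \<Rightarrow> nat \<Rightarrow> nat \<Rightarrow> (nat \<Rightarrow> clause) pmf" where
  "random_cnf m n d = Pi_pmf {..<m} {} (\<lambda>_. pmf_of_set (clauses n d))"

definition assignments :: "nat \<Rightarrow> (nat \<Rightarrow> bool) set" where
  "assignments n = {..<n} \<rightarrow>\<^sub>E (UNIV :: bool set)"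

definition satisfies :: "(nat \<Rightarrow> bool) \<Rightarrow> clause \<Rightarrow> bool" where
  "satisfies \<alpha> C \<longleftrightarrow> (\<exists>(v, b) \<in> C. \<alpha> v = b)"

definition unsat_matrix :: "(nat \<Rightarrow> clause) \<Rightarrow> (nat \<Rightarrow> bool) \<Rightarrow> nat \<Rightarrow> nat" where
  "unsat_matrix F \<alpha> i = (if satisfies \<alpha> (F i) then 0 else 1)"

definition rows_distinct :: "nat \<Rightarrow> nat \<Rightarrow> (nat \<Rightarrow> clause) \<Rightarrow> bool" where
  "rows_distinct n m F \<longleftrightarrow>
     (\<forall>\<alpha>\<in>assignments n. \<forall>\<beta>\<in>assignments n. \<alpha> \<noteq> \<beta> \<longrightarrow>
        (\<lambda>i\<in>{..<m}. unsat_matrix F \<alpha> i) \<noteq> (\<lambda>i\<in>{..<m}. unsat_matrix F \<beta> i))"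

end

theory Submission
  imports Defs
begin


lemma card_clauses_le: "card (clauses n d) \<le> (n choose d) * 2^d"
proof -
  let ?W = "{V. V \<subseteq> {..<n} \<and> card V = d}"
  let ?S = "Sigma ?W (\<lambda>V. V \<rightarrow>\<^sub>E (UNIV::bool set))"
  let ?f = "\<lambda>(V,g). (\<lambda>u. (u, g u)) ` V"
  have sub: "clauses n d \<subseteq> ?f ` ?S"
  proof
    fix C assume C: "C \<in> clauses n d"
    hence Cs: "C \<subseteq> {..<n} \<times> UNIV" "finite C" "card C = d" "inj_on fst C"
      by (auto simp: clauses_def)
    define V where "V = fst ` C"
    define g where "g = (\<lambda>u\<in>V. snd (the_inv_into C fst u))"
    have cV: "card V = d" using Cs by (simp add: V_def card_image)
    have VW: "V \<in> ?W" using Cs cV by (auto simp: V_def)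
    have gP: "g \<in> V \<rightarrow>\<^sub>E UNIV" by (simp add: g_def)
    have "C = (\<lambda>u. (u, g u)) ` V"
    proof (intro equalityI subsetI)
      fix p assume p: "p \<in> C"
      have "the_inv_into C fst (fst p) = p" using Cs(4) p by (simp add: the_inv_into_f_f)
      hence "p = (fst p, g (fst p))" using p by (simp add: g_def V_def)
      thus "p \<in> (\<lambda>u. (u, g u)) ` V" using p by (auto simp: V_def)
    next
      fix q assume "q \<in> (\<lambda>u. (u, g u)) ` V"
      then obtain p where p: "p \<in> C" and q: "q = (fst p, g (fst p))" by (auto simp: V_def)
      have "the_inv_into C fst (fst p) = p" using Cs(4) p by (simp add: the_inv_into_f_f)
      hence "q = p" using p q by (simp add: g_def V_def)
      thus "q \<in> C" using p by simp
    qed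
    thus "C \<in> ?f ` ?S" using VW gP by (auto intro!: image_eqI[of _ _ "(V,g)"])
  qed
  have finW: "finite ?W" by (rule finite_subset[of _ "Pow {..<n}"]) auto
  have finS: "finite ?S" using finW by (auto intro!: finite_SigmaI finite_PiE dest: finite_subset[OF _ finite_lessThan])
  have "card ?S = (\<Sum>V\<in>?W. card (V \<rightarrow>\<^sub>E (UNIV::bool set)))"
    using finW by (subst card_SigmaI) (auto intro!: finite_PiE dest: finite_subset[OF _ finite_lessThan])
  also have "\<dots> = (\<Sum>V\<in>?W. 2^d)"
  proof (rule sum.cong)
    fix V assume "V \<in> ?W"
    thus "card (V \<rightarrow>\<^sub>E (UNIV::bool set)) = 2^d"
      by (subst card_PiE) (auto intro: finite_subset)
  qed simp
  also have "\<dots> = (n choose d) * 2^d" using n_subsets[of "{..<n}" d] by simp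
  finally have cS: "card ?S = (n choose d) * 2^d" .
  have "card (clauses n d) \<le> card (?f ` ?S)"
    using sub finS by (intro card_mono) auto
  also have "\<dots> \<le> card ?S" using card_image_le finS by blast
  finally show ?thesis using cS by simp
qed



lemma card_containing:
  assumes "v < n" "1 \<le> d"
  shows "card {V. V \<subseteq> {..<n} \<and> card V = d \<and> v \<in> V} = (n-1) choose (d-1)"
proof -
  let ?W = "{W. W \<subseteq> {..<n} - {v} \<and> card W = d-1}"
  have eq: "{V. V \<subseteq> {..<n} \<and> card V = d \<and> v \<in> V} = insert v ` ?W"
  proof (intro equalityI subsetI)
    fix V assume V: "V \<in> {V. V \<subseteq> {..<n} \<and> card V = d \<and> v \<in> V}"
    have fV: "finite V" using V finite_subset by blast
    have "V - {v} \<in> ?W" using V fV by auto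
    moreover have "V = insert v (V - {v})" using V by auto
    ultimately show "V \<in> insert v ` ?W" by blast
  next
    fix V assume "V \<in> insert v ` ?W"
    then obtain W where W: "W \<in> ?W" "V = insert v W" by blast
    have fW: "finite W" using W(1) finite_subset[of W "{..<n}"] by auto
    have "v \<notin> W" using W(1) by auto
    hence "card V = d" using W fW assms by simp
    thus "V \<in> {V. V \<subseteq> {..<n} \<and> card V = d \<and> v \<in> V}"
      using W fW assms by auto
  qed
  have inj: "inj_on (insert v) ?W"
    by (rule inj_onI) (metis Diff_insert_absorb Diff_iff insertI1 mem_Collect_eq subsetD)
  have "card (insert v ` ?W) = card ?W" using inj by (rule card_image)
  also have "\<dots> = card ({..<n} - {v}) choose (d-1)" by (rule n_subsets) simp
  also have "\<dots> = (n-1) choose (d-1)" using assms by simp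
  finally show ?thesis using eq by simp
qed

lemma finite_clauses: "finite (clauses n d)"
  by (rule finite_subset[of _ "Pow ({..<n} \<times> (UNIV::bool set))"]) (auto simp: clauses_def)

lemma agree_bound:
  assumes a: "\<alpha> \<in> assignments n" and b: "\<beta> \<in> assignments n" and ab: "\<alpha> \<noteq> \<beta>"
    and d: "1 \<le> d" "d \<le> n"
  shows "measure_pmf.prob (pmf_of_set (clauses n d)) {C. satisfies \<alpha> C = satisfies \<beta> C}
           \<le> 1 - real d / (real n * 2^d)"
proof -
  obtain v where v: "v < n" "\<alpha> v \<noteq> \<beta> v"
  proof -
    from ab obtain v where "\<alpha> v \<noteq> \<beta> v" by blast
    moreover have "v < n" using a b calculation by (auto simp: assignments_def PiE_def extensional_def)
    ultimately show ?thesis using that by blast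
  qed
  let ?S = "clauses n d"
  let ?Vs = "{V. V \<subseteq> {..<n} \<and> card V = d \<and> v \<in> V}"
  let ?cl = "\<lambda>V. (\<lambda>u. (u, \<not> \<alpha> u)) ` V"
  let ?Ag = "{C. satisfies \<alpha> C = satisfies \<beta> C}"
  let ?D = "?cl ` ?Vs"
  have DS: "?D \<subseteq> ?S - ?Ag"
  proof
    fix C assume "C \<in> ?D"
    then obtain V where V: "V \<in> ?Vs" "C = ?cl V" by blast
    have fV: "finite V" using V finite_subset by blast
    have "inj_on (\<lambda>u. (u, \<not> \<alpha> u)) V" by (auto intro: inj_onI)
    hence "card C = d" using V by (simp add: card_image)
    moreover have "inj_on fst C" using V by (auto intro: inj_onI)
    moreover have "\<not> satisfies \<alpha> C" using V by (auto simp: satisfies_def)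
    moreover have "satisfies \<beta> C" using V v unfolding satisfies_def by auto
    ultimately show "C \<in> ?S - ?Ag" using V fV by (auto simp: clauses_def)
  qed
  have injcl: "inj_on ?cl ?Vs"
  proof (rule inj_onI)
    fix V W assume "?cl V = ?cl W"
    hence "fst ` ?cl V = fst ` ?cl W" by simp
    thus "V = W" by (simp add: image_image)
  qed
  have cD: "card ?D = (n-1) choose (d-1)"
    using card_image[OF injcl] card_containing[OF v(1) d(1)] by simp
  have fS: "finite ?S" by (rule finite_clauses)
  have Dne: "?D \<noteq> {}"
  proof -
    have "(n-1) choose (d-1) > 0" using d by simp
    thus ?thesis using cD by (metis card.empty less_irrefl)
  qed
  hence Sne: "?S \<noteq> {}" using DS by blast
  have cSpos: "card ?S > 0" using fS Sne by (simp add: card_gt_0_iff)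
  have "card ?D \<le> card (?S - ?Ag)" using DS fS by (intro card_mono) auto
  hence le1: "real ((n-1) choose (d-1)) \<le> real (card (?S \<inter> - ?Ag))"
    using cD by (simp add: Diff_eq)
  have cS: "real (card ?S) \<le> real (n choose d) * 2^d"
    using card_clauses_le[of n d] by (metis of_nat_le_iff of_nat_mult of_nat_numeral of_nat_power)
  have binom: "real d * real (n choose d) = real n * real ((n-1) choose (d-1))"
    using times_binomial_minus1_eq[of d n] d by (metis of_nat_mult not_one_le_zero neq0_conv)
  have npos: "real n > 0" using d by simp
  have cnd: "real (n choose d) > 0" using d by simp
  have "real d / (real n * 2^d) = real ((n-1) choose (d-1)) / (real (n choose d) * 2^d)"
    using binom npos cnd by (simp add: field_simps)
  also have "\<dots> \<le> real ((n-1) choose (d-1)) / real (card ?S)"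
    using cS cSpos by (intro divide_left_mono) auto
  also have "\<dots> \<le> real (card (?S \<inter> - ?Ag)) / real (card ?S)"
    using le1 cSpos by (intro divide_right_mono) auto
  also have "\<dots> = measure_pmf.prob (pmf_of_set ?S) (- ?Ag)"
    using fS Sne by (simp add: measure_pmf_of_set)
  finally have lo: "real d / (real n * 2^d) \<le> measure_pmf.prob (pmf_of_set ?S) (- ?Ag)" .
  have "measure_pmf.prob (pmf_of_set ?S) (- ?Ag) = 1 - measure_pmf.prob (pmf_of_set ?S) ?Ag"
    using measure_pmf.prob_compl[of ?Ag "pmf_of_set ?S"] by (simp add: Compl_eq_Diff_UNIV)
  thus ?thesis using lo by linarith
qed



lemma card_assignments: "card (assignments n) = 2^n"
  by (simp add: assignments_def card_PiE)

lemma finite_assignments: "finite (assignments n)"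
  by (simp add: assignments_def finite_PiE)

lemma good_bound:
  assumes d: "1 \<le> d" "d \<le> n"
  shows "measure_pmf.prob (random_cnf m n d) {F. rows_distinct n m F}
           \<ge> 1 - 4^n * (1 - real d / (real n * 2^d))^m"
proof -
  let ?P = "random_cnf m n d"
  let ?U = "pmf_of_set (clauses n d)"
  let ?A = "assignments n"
  let ?I = "{p \<in> ?A \<times> ?A. fst p \<noteq> snd p}"
  let ?Ag = "\<lambda>p. {C. satisfies (fst p) C = satisfies (snd p) C}"
  let ?E = "\<lambda>p. Pi {..<m} (\<lambda>_. ?Ag p)"
  let ?b = "1 - real d / (real n * 2^d)"
  have sub: "{F. \<not> rows_distinct n m F} \<subseteq> \<Union> (?E ` ?I)"
  proof
    fix F assume "F \<in> {F. \<not> rows_distinct n m F}"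
    then obtain \<alpha> \<beta> where ab: "\<alpha> \<in> ?A" "\<beta> \<in> ?A" "\<alpha> \<noteq> \<beta>"
      and eq: "(\<lambda>i\<in>{..<m}. unsat_matrix F \<alpha> i) = (\<lambda>i\<in>{..<m}. unsat_matrix F \<beta> i)"
      unfolding rows_distinct_def mem_Collect_eq by blast
    have "F \<in> ?E (\<alpha>, \<beta>)"
    proof
      fix i assume i: "i \<in> {..<m}"
      have "unsat_matrix F \<alpha> i = unsat_matrix F \<beta> i" using fun_cong[OF eq, of i] i by simp
      thus "F i \<in> ?Ag (\<alpha>, \<beta>)" by (auto simp: unsat_matrix_def split: if_splits)
    qed
    thus "F \<in> \<Union> (?E ` ?I)" using ab by force
  qed
  have finI: "finite ?I" using finite_assignments by auto
  have each: "measure_pmf.prob ?P (?E p) \<le> ?b ^ m" if p: "p \<in> ?I" for p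
  proof -
    have "measure_pmf.prob ?P (?E p) = (\<Prod>i\<in>{..<m}. measure_pmf.prob ?U (?Ag p))"
      unfolding random_cnf_def by (rule measure_Pi_pmf_Pi) simp
    also have "\<dots> = measure_pmf.prob ?U (?Ag p) ^ m" by simp
    also have "\<dots> \<le> ?b ^ m"
      using p agree_bound[of "fst p" n "snd p" d] d by (intro power_mono) auto
    finally show ?thesis .
  qed
  have "measure_pmf.prob ?P {F. \<not> rows_distinct n m F} \<le> measure_pmf.prob ?P (\<Union> (?E ` ?I))"
    using sub by (intro measure_pmf.finite_measure_mono) auto
  also have "\<dots> \<le> (\<Sum>p\<in>?I. measure_pmf.prob ?P (?E p))"
    using finI by (intro measure_pmf.finite_measure_subadditive_finite) auto
  also have "\<dots> \<le> real (card ?I) * ?b ^ m"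
    using each by (intro sum_bounded_above) auto
  also have "\<dots> \<le> 4^n * ?b ^ m"
  proof (rule mult_right_mono)
    have "card ?I \<le> card (?A \<times> ?A)" using finite_assignments by (intro card_mono) auto
    also have "\<dots> = 4^n" by (simp add: card_cartesian_product card_assignments power_mult_distrib[symmetric])
    finally have "real (card ?I) \<le> real (4^n)" by (rule of_nat_mono)
    thus "real (card ?I) \<le> 4^n" by simp
    have n1: "real n * 1 \<le> real n * 2^d" by (intro mult_left_mono) simp_all
    have "real d \<le> real n * 2^d" using d n1 by linarith
    moreover have "real n * 2^d > 0" using d by simp
    ultimately have "real d / (real n * 2^d) \<le> 1" by simp
    hence "0 \<le> ?b" by simp
    thus "0 \<le> ?b ^ m" by (rule zero_le_power)
  qed
  finally have bad: "measure_pmf.prob ?P {F. \<not> rows_distinct n m F} \<le> 4^n * ?b ^ m" .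
  have "measure_pmf.prob ?P {F. rows_distinct n m F} = 1 - measure_pmf.prob ?P {F. \<not> rows_distinct n m F}"
    using measure_pmf.prob_compl[of "{F. \<not> rows_distinct n m F}" ?P]
    by (simp add: Compl_eq_Diff_UNIV[symmetric] Collect_neg_eq[symmetric])
  thus ?thesis using bad by linarith
qed



theorem mainTheorem8:
  fixes d :: nat and c :: real and m :: "nat \<Rightarrow> nat"
  assumes "d \<ge> 1"
    and "c > 2 / log 2 (exp 1)"
    and "\<And>n. real (m n) \<ge> c * 2 ^ d * real n ^ 2 / real d"
  shows "(\<lambda>n. measure_pmf.prob (random_cnf (m n) n d) {F. rows_distinct n (m n) F})
           \<longlonglongrightarrow> 1"
proof -
  have l2: "log 2 (exp 1) = 1 / ln 2" by (simp add: log_def)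
  have "2 / log 2 (exp 1) = ln 4"
  proof -
    have "ln (4::real) = ln (2^2)" by simp
    also have "\<dots> = 2 * ln 2" by (subst ln_realpow) auto
    finally show ?thesis using l2 by simp
  qed
  hence c4: "c > ln 4" using assms(2) by simp
  define q where "q = 4 * exp (- c)"
  have q0: "q > 0" by (simp add: q_def)
  have "exp (-c) < exp (- ln 4)" using c4 by simp
  hence "exp (-c) < 1/4" by (simp add: exp_minus)
  hence q1: "q < 1" by (simp add: q_def)
  have lim: "(\<lambda>n. 1 - q ^ n) \<longlonglongrightarrow> 1"
    using LIMSEQ_power_zero[of q] q0 q1 tendsto_diff[of "\<lambda>_. 1" 1 sequentially "\<lambda>n. q^n" 0] by simp
  have dpos: "real d > 0" using assms(1) by simp
  have ev: "eventually (\<lambda>n. 1 - q ^ n \<le> measure_pmf.prob (random_cnf (m n) n d) {F. rows_distinct n (m n) F}) sequentially"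
    using eventually_ge_at_top[of d]
  proof eventually_elim
    case (elim n)
    define x where "x = real d / (real n * 2^d)"
    have npos: "real n > 0" using elim assms(1) by simp
    have x0: "0 \<le> x" by (simp add: x_def)
    have n1: "real n * 1 \<le> real n * 2^d" by (intro mult_left_mono) simp_all
    have "real d \<le> real n * 2^d" using elim n1 by linarith
    hence x1: "x \<le> 1" using npos by (simp add: x_def)
    have mge: "real (m n) \<ge> c * 2 ^ d * real n ^ 2 / real d" by (rule assms(3))
    have "real (m n) * real d \<ge> c * 2 ^ d * real n ^ 2"
      using mge dpos by (simp add: divide_le_eq)
    hence "x * real (m n) \<ge> c * real n"
      using npos by (simp add: x_def field_simps power2_eq_square)
    hence "(1 - x) ^ m n \<le> exp (- c * real n)"
    proof -
      assume xm: "x * real (m n) \<ge> c * real n"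
      have "(1 - x) ^ m n \<le> exp (- x) ^ m n"
        using x1 exp_ge_add_one_self[of "-x"] by (intro power_mono) simp_all
      also have "\<dots> = exp (- x * real (m n))"
        by (simp add: exp_of_nat_mult[symmetric] mult.commute)
      also have "\<dots> \<le> exp (- c * real n)" using xm by simp
      finally show ?thesis .
    qed
    hence "4^n * (1 - x) ^ m n \<le> 4^n * exp (- c * real n)" by (intro mult_left_mono) simp_all
    also have "4^n * exp (- c * real n) = q ^ n"
      by (simp add: q_def power_mult_distrib exp_of_nat_mult[symmetric] mult.commute)
    finally have "1 - q^n \<le> 1 - 4^n * (1 - x) ^ m n" by simp
    also have "\<dots> \<le> measure_pmf.prob (random_cnf (m n) n d) {F. rows_distinct n (m n) F}"
      using good_bound[of d n "m n"] elim assms(1) by (simp add: x_def)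
    finally show ?case .
  qed
  have ev2: "eventually (\<lambda>n. measure_pmf.prob (random_cnf (m n) n d) {F. rows_distinct n (m n) F} \<le> 1) sequentially"
    by simp
  show ?thesis by (rule tendsto_sandwich[OF ev ev2 lim tendsto_const])
qed

end
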